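(* Let $n = 2$, $\mathsf{AP}^I_L = \{i\}$ and $\mathsf{AP}^O = \{o\}$, so that $\mathcal{I} = 2^{\{i\}\times\{0,1\}}$ and $\mathcal{O} = 2^{\{o\}\times\{0,1\}}$. The set of all computation trees $\tau : \mathcal{I}^* \to \mathcal{O}$ that have the symmetry property is not a regular tree language.
   Context: For $u \subseteq \mathsf{AP}\times\{0,1\}$ and $k\in\mathbb{Z}$, $\mathrm{rot}(u,k) = \{(p,(j+k)\bmod 2) \mid (p,j)\in u\}$ (modulo always returns a value in $\{0,1\}$), extended letterwise to words. A computation tree is a map $\tau : \mathcal{I}^* \to \mathcal{O}$. It has the symmetry property if $\tau(\mathrm{rot}(t,k)) = \mathrm{rot}(\tau(t),k)$ for all $t\in\mathcal{I}^*$ and $k\in\{0,1\}$. A set of such trees is a regular tree language if it is the language of some finite tree automaton (e.g., with Muller acceptance condition) over $\mathcal{I}$-branching, $\mathcal{O}$-labelled infinite trees. *)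

theory Defs
  imports Main "HOL-Library.Numeral_Type"
begin

text \<open>Index set {0,1} is modelled by the type 2 (integers modulo 2), so that
  (j + k) mod 2 is just j + of_int k.\<close>

definition rot :: "('p \<times> 2) set \<Rightarrow> int \<Rightarrow> ('p \<times> 2) set" where
  "rot u k = (\<lambda>(p, j). (p, j + of_int k)) ` u"

definition rot_word :: "('p \<times> 2) set list \<Rightarrow> int \<Rightarrow> ('p \<times> 2) set list" where
  "rot_word t k = map (\<lambda>u. rot u k) t"

definition symmetric_tree :: "(('p \<times> 2) set list \<Rightarrow> ('q \<times> 2) set) \<Rightarrow> bool" where
  "symmetric_tree \<tau> \<longleftrightarrow>
     (\<forall>t. \<forall>k::int \<in> {0, 1}. \<tau> (rot_word t k) = rot (\<tau> t) k)"

text \<open>Nondeterministic Muller tree automata over 'i-branching, 'o-labelled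
  infinite trees (trees are maps 'i list => 'o; the children of node w are w @ [a]).
  States are drawn from nat (any finite state set can be renamed into nat).\<close>

definition is_run ::
  "nat \<Rightarrow> (nat \<times> 'o \<times> ('i \<Rightarrow> nat)) set \<Rightarrow> ('i list \<Rightarrow> 'o) \<Rightarrow> ('i list \<Rightarrow> nat) \<Rightarrow> bool" where
  "is_run q0 \<delta> \<tau> r \<longleftrightarrow> r [] = q0 \<and> (\<forall>w. (r w, \<tau> w, \<lambda>a. r (w @ [a])) \<in> \<delta>)"

definition muller_accepting :: "nat set set \<Rightarrow> ('i list \<Rightarrow> nat) \<Rightarrow> bool" where
  "muller_accepting F r \<longleftrightarrow>
     (\<forall>\<pi> :: nat \<Rightarrow> 'i. {q. \<exists>\<^sub>\<infinity>n. r (map \<pi> [0..<n]) = q} \<in> F)"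

definition tree_lang ::
  "nat \<Rightarrow> (nat \<times> 'o \<times> ('i \<Rightarrow> nat)) set \<Rightarrow> nat set set \<Rightarrow> ('i list \<Rightarrow> 'o) set" where
  "tree_lang q0 \<delta> F = {\<tau>. \<exists>r. is_run q0 \<delta> \<tau> r \<and> muller_accepting F r}"

definition regular_tree_language :: "('i list \<Rightarrow> 'o) set \<Rightarrow> bool" where
  "regular_tree_language L \<longleftrightarrow>
     (\<exists>(Q::nat set) q0 \<delta> F. finite Q \<and> q0 \<in> Q \<and> \<delta> \<subseteq> Q \<times> UNIV \<times> {f. range f \<subseteq> Q}
        \<and> F \<subseteq> Pow Q \<and> L = tree_lang q0 \<delta> F)"

datatype apI = i_prop
datatype apO = o_prop

end

theory Submission
  imports Defs "HOL-Library.Infinite_Set"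
begin

definition la :: "(apI \<times> 2) set" where "la = {(i_prop, 0)}"
definition lb :: "(apI \<times> 2) set" where "lb = {(i_prop, 1)}"
definition oa :: "(apO \<times> 2) set" where "oa = {(o_prop, 0)}"
definition ob :: "(apO \<times> 2) set" where "ob = {(o_prop, 1)}"

definition tm :: "nat \<Rightarrow> (apI \<times> 2) set list \<Rightarrow> (apO \<times> 2) set" where
  "tm m t = (if t = replicate (Suc m) la then oa else if t = replicate (Suc m) lb then ob else {})"

lemma two_eq: "(2::2) = 0" by simp

lemma rot_rot: "rot (rot u 1) 1 = u"
proof -
  have "rot (rot u 1) 1 = (\<lambda>(p, j). (p, j + 1 + 1)) ` u"
    unfolding rot_def by (simp add: image_image case_prod_beta add.assoc)
  also have "\<dots> = u" by (simp add: add.assoc two_eq)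
  finally show ?thesis .
qed

lemma rot0: "rot u 0 = u" unfolding rot_def by (simp add: case_prod_beta)

lemma rot_word_rot: "rot_word (rot_word t 1) 1 = t"
  unfolding rot_word_def by (simp add: rot_rot comp_def)

lemma rot_word0: "rot_word t 0 = t"
  unfolding rot_word_def by (simp add: rot0)

lemma rot_la: "rot la 1 = lb" unfolding rot_def la_def lb_def by simp
lemma rot_lb: "rot lb 1 = la" unfolding rot_def la_def lb_def by simp
lemma rot_oa: "rot oa 1 = ob" unfolding rot_def oa_def ob_def by simp
lemma rot_ob: "rot ob 1 = oa" unfolding rot_def oa_def ob_def by simp
lemma rot_empty: "rot {} k = {}" unfolding rot_def by simp

lemma la_lb: "la \<noteq> lb" unfolding la_def lb_def by simp
lemma oa_ob: "oa \<noteq> ob" unfolding oa_def ob_def by simp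
lemma ob_ne: "ob \<noteq> {}" unfolding ob_def by simp
lemma oa_ne: "oa \<noteq> {}" unfolding oa_def by simp

lemma rw_a: "rot_word (replicate n la) 1 = replicate n lb"
  unfolding rot_word_def by (simp add: rot_la)
lemma rw_b: "rot_word (replicate n lb) 1 = replicate n la"
  unfolding rot_word_def by (simp add: rot_lb)

lemma rep_ne: "replicate (Suc m) la \<noteq> replicate (Suc n) lb"
  using la_lb by simp

lemma tm_sym: "symmetric_tree (tm m)"
  unfolding symmetric_tree_def
proof (intro allI ballI)
  fix t and k :: int assume "k \<in> {0, 1}"
  then consider "k = 0" | "k = 1" by auto
  then show "tm m (rot_word t k) = rot (tm m t) k"
  proof cases
    case 1 then show ?thesis by (simp add: rot_word0 rot0)
  next
    case 2
    show ?thesis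
    proof (cases "t = replicate (Suc m) la")
      case True then show ?thesis using 2 la_lb
        by (simp add: tm_def rw_a rot_oa del: replicate.simps)
    next
      case F1: False
      show ?thesis
      proof (cases "t = replicate (Suc m) lb")
        case True then show ?thesis using 2 la_lb F1
          by (simp add: tm_def rw_b rot_ob del: replicate.simps)
      next
        case F2: False
        have "rot_word t 1 \<noteq> replicate (Suc m) la"
        proof
          assume "rot_word t 1 = replicate (Suc m) la"
          then have "rot_word (rot_word t 1) 1 = replicate (Suc m) lb" by (simp only: rw_a)
          then show False using F2 by (simp only: rot_word_rot)
        qed
        moreover have "rot_word t 1 \<noteq> replicate (Suc m) lb"
        proof
          assume "rot_word t 1 = replicate (Suc m) lb"
          then have "rot_word (rot_word t 1) 1 = replicate (Suc m) la" by (simp only: rw_b)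
          then show False using F1 by (simp only: rot_word_rot)
        qed
        ultimately show ?thesis using 2 F1 F2
          by (simp add: tm_def rot_empty del: replicate.simps)
      qed
    qed
  qed
qed

lemma infm_shift:
  fixes P R :: "nat \<Rightarrow> bool"
  assumes "\<And>k. k \<ge> 1 \<Longrightarrow> P k = R k"
  shows "(\<exists>\<^sub>\<infinity>k. P k) = (\<exists>\<^sub>\<infinity>k. R k)"
  unfolding INFM_nat
proof (intro iffI allI)
  fix m assume h: "\<forall>m. \<exists>n>m. P n"
  then obtain n where "n > m" "P n" by blast
  moreover have "1 \<le> n" using \<open>n > m\<close> by simp
  ultimately show "\<exists>n>m. R n" using assms[of n] by blast
next
  fix m assume h: "\<forall>m. \<exists>n>m. R n"
  then obtain n where "n > m" "R n" by blast
  moreover have "1 \<le> n" using \<open>n > m\<close> by simp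
  ultimately show "\<exists>n>m. P n" using assms[of n] by blast
qed

theorem lemma6:
  shows "\<not> regular_tree_language
           {\<tau> :: (apI \<times> 2) set list \<Rightarrow> (apO \<times> 2) set. symmetric_tree \<tau>}"
proof
  assume "regular_tree_language
           {\<tau> :: (apI \<times> 2) set list \<Rightarrow> (apO \<times> 2) set. symmetric_tree \<tau>}"
  then obtain Q :: "nat set" and q0 \<delta> F where fQ: "finite Q" and q0: "q0 \<in> Q"
    and dQ: "\<delta> \<subseteq> Q \<times> UNIV \<times> {f. range f \<subseteq> Q}"
    and L: "{\<tau> :: (apI \<times> 2) set list \<Rightarrow> (apO \<times> 2) set. symmetric_tree \<tau>} = tree_lang q0 \<delta> F"
    unfolding regular_tree_language_def by (elim exE conjE) (rule that)
  have ex: "\<exists>r. is_run q0 \<delta> (tm m) r \<and> muller_accepting F r" for m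
    using tm_sym[of m] L unfolding tree_lang_def by blast
  define r where "r m = (SOME r. is_run q0 \<delta> (tm m) r \<and> muller_accepting F r)" for m
  have rr: "is_run q0 \<delta> (tm m) (r m) \<and> muller_accepting F (r m)" for m
    unfolding r_def using someI_ex[OF ex[of m]] .
  have rQ: "r m [c] \<in> Q" for m c
  proof -
    have "(r m [], tm m [], \<lambda>a. r m ([] @ [a])) \<in> \<delta>" using rr[of m] unfolding is_run_def by blast
    then show ?thesis using dQ by auto
  qed
  define g where "g m = (r m [la], r m [lb])" for m
  have "g ` UNIV \<subseteq> Q \<times> Q" using rQ by (auto simp: g_def)
  then have "\<not> inj g" using fQ by (meson finite_SigmaI infinite_UNIV_nat inj_on_finite)
  then obtain m n where mn: "m \<noteq> n" "g m = g n" unfolding inj_def by blast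
  define isb where "isb w \<longleftrightarrow> w \<noteq> [] \<and> hd w = lb" for w
  define \<tau>' where "\<tau>' w = (if isb w then tm n w else tm m w)" for w
  define r' where "r' w = (if isb w then r n w else r m w)" for w
  have run: "is_run q0 \<delta> \<tau>' r'"
    unfolding is_run_def
  proof
    show "r' [] = q0" using rr[of m] by (simp add: r'_def isb_def is_run_def)
    show "\<forall>w. (r' w, \<tau>' w, \<lambda>a. r' (w @ [a])) \<in> \<delta>"
    proof
      fix w
      show "(r' w, \<tau>' w, \<lambda>a. r' (w @ [a])) \<in> \<delta>"
      proof (cases "w = []")
        case True
        have "(\<lambda>a. r' (w @ [a])) = (\<lambda>a. r m ([] @ [a]))"
          using mn(2) True by (auto simp: r'_def isb_def g_def)
        moreover have "r' w = r m []" "\<tau>' w = tm m []" using True by (auto simp: r'_def \<tau>'_def isb_def)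
        ultimately show ?thesis using True rr[of m] unfolding is_run_def by metis
      next
        case False
        then have h: "isb (w @ [a]) = isb w" for a by (simp add: isb_def)
        show ?thesis
        proof (cases "isb w")
          case True
          then show ?thesis using rr[of n] h unfolding is_run_def r'_def \<tau>'_def by simp
        next
          case False
          then show ?thesis using rr[of m] h unfolding is_run_def r'_def \<tau>'_def by simp
        qed
      qed
    qed
  qed
  have acc: "muller_accepting F r'"
    unfolding muller_accepting_def
  proof
    fix \<pi> :: "nat \<Rightarrow> (apI \<times> 2) set"
    define j where "j = (if \<pi> 0 = lb then n else m)"
    have eqk: "\<And>k. k \<ge> 1 \<Longrightarrow> r' (map \<pi> [0..<k]) = r j (map \<pi> [0..<k])"
    proof -
      fix k :: nat assume "k \<ge> 1"
      then have "map \<pi> [0..<k] \<noteq> []" "hd (map \<pi> [0..<k]) = \<pi> 0"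
        by (auto simp: hd_map upt_rec[of 0 k])
      then show "r' (map \<pi> [0..<k]) = r j (map \<pi> [0..<k])"
        by (simp add: r'_def isb_def j_def)
    qed
    have "{q. \<exists>\<^sub>\<infinity>k. r' (map \<pi> [0..<k]) = q} = {q. \<exists>\<^sub>\<infinity>k. r j (map \<pi> [0..<k]) = q}"
      by (intro Collect_cong infm_shift) (simp add: eqk)
    moreover have "{q. \<exists>\<^sub>\<infinity>k. r j (map \<pi> [0..<k]) = q} \<in> F"
      using rr[of j] unfolding muller_accepting_def by blast
    ultimately show "{q. \<exists>\<^sub>\<infinity>k. r' (map \<pi> [0..<k]) = q} \<in> F" by simp
  qed
  have "\<tau>' \<in> tree_lang q0 \<delta> F" using run acc unfolding tree_lang_def by blast
  then have sym: "symmetric_tree \<tau>'" using L by blast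
  define A where "A = replicate (Suc m) la"
  have "\<tau>' (rot_word A 1) = rot (\<tau>' A) 1" using sym unfolding symmetric_tree_def by simp
  moreover have "\<tau>' A = oa" using la_lb by (simp add: \<tau>'_def A_def isb_def tm_def)
  moreover have "rot_word A 1 = replicate (Suc m) lb" unfolding A_def by (rule rw_a)
  moreover have "\<tau>' (replicate (Suc m) lb) = {}"
    using la_lb mn(1) by (simp add: \<tau>'_def isb_def tm_def)
  ultimately show False using rot_oa ob_ne by metis
qed

end
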